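(* Let $k\ge1$, $N\ge 1$, $h=1/N$, and let $\tilde u:[0,T]\to\mathcal{V}_h^k$ be a continuously differentiable solution of the semi-discrete problem $$(\tilde u_t,\chi)+(P[\tilde u_{xt}],\chi_x)=(P[\tilde u+\tfrac12\tilde u^2],\chi_x)\quad\text{for all }\chi\in\mathcal{V}_h^k,\ t\in[0,T].$$ Then the mass $\mathcal{M}(t;\tilde u)=\int_0^1\tilde u\,dx$ and the energy $\mathcal{E}(t;\tilde u)=\frac12\int_0^1\big(\tilde u^2+\tfrac13\tilde u^3\big)\,dx$ satisfy $\frac{d}{dt}\mathcal{M}(t;\tilde u)=0$ and $\frac{d}{dt}\mathcal{E}(t;\tilde u)=0$.
   Context: $C_p$ is the space of continuous $1$-periodic real functions; $x_i=ih$; $\mathcal{V}_h^k=\{\phi\in C_p:\ \phi|_{[x_{i-1},x_i]}\text{ is a polynomial of degree}\le k,\ i=1,\dots,N\}$. $(\cdot,\cdot)$ is the $L^2(0,1)$ inner product and $P$ the $L^2(0,1)$-orthogonal projection onto $\mathcal{V}_h^k$. Subscripts $x,t$ denote (piecewise) spatial and time derivatives. *)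

theory Defs
  imports "HOL-Analysis.Analysis" "HOL-Computational_Algebra.Polynomial"
begin

definition Vh :: "nat \<Rightarrow> nat \<Rightarrow> (real \<Rightarrow> real) set" where
  "Vh N k = {\<phi>. continuous_on UNIV \<phi> \<and> (\<forall>x. \<phi> (x + 1) = \<phi> x) \<and>
      (\<forall>i\<in>{1..N}. \<exists>p :: real poly. degree p \<le> k \<and>
         (\<forall>x\<in>{real (i - 1) / real N .. real i / real N}. \<phi> x = poly p x))}"

definition L2ip :: "(real \<Rightarrow> real) \<Rightarrow> (real \<Rightarrow> real) \<Rightarrow> real" where
  "L2ip f g = integral {0..1} (\<lambda>x. f x * g x)"

definition L2proj :: "nat \<Rightarrow> nat \<Rightarrow> (real \<Rightarrow> real) \<Rightarrow> (real \<Rightarrow> real)" where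
  "L2proj N k g = (THE \<phi>. \<phi> \<in> Vh N k \<and> (\<forall>w\<in>Vh N k. L2ip \<phi> w = L2ip g w))"

definition mass :: "(real \<Rightarrow> real) \<Rightarrow> real" where
  "mass v = integral {0..1} v"

definition energy :: "(real \<Rightarrow> real) \<Rightarrow> real" where
  "energy v = 1/2 * integral {0..1} (\<lambda>x. (v x)\<^sup>2 + (v x)^3 / 3)"

end

theory Submission
  imports Defs
begin

definition lagr :: "(nat \<Rightarrow> real) \<Rightarrow> nat \<Rightarrow> nat \<Rightarrow> real poly" where
  "lagr z k j = smult (1 / (\<Prod>i\<in>{..k}-{j}. (z j - z i))) (\<Prod>i\<in>{..k}-{j}. [:- z i, 1:])"

lemma lagr_eval:
  assumes "inj_on z {..k}" "j \<le> k" "i \<le> k"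
  shows "poly (lagr z k j) (z i) = (if i = j then 1 else 0)"
proof (cases "i = j")
  case True
  have "(\<Prod>l\<in>{..k}-{j}. (z j - z l)) \<noteq> 0"
    using assms by (auto simp: inj_on_def)
  then show ?thesis using True by (simp add: lagr_def poly_prod)
next
  case False
  have "(\<Prod>l\<in>{..k}-{j}. poly [:- z l, 1:] (z i)) = 0"
    by (rule prod_zero) (use False assms in auto)
  then show ?thesis using False by (simp add: lagr_def poly_prod)
qed

lemma lagr_deg: "degree (lagr z k j) \<le> k" if "j \<le> k"
proof -
  have "degree (\<Prod>i\<in>{..k}-{j}. [:- z i, 1:]) \<le> sum (degree \<circ> (\<lambda>i. [:- z i, 1:])) ({..k}-{j})"
    by (rule degree_prod_sum_le) simp
  also have "\<dots> = card ({..k}-{j})" by simp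
  also have "\<dots> = k" using that by simp
  finally show ?thesis unfolding lagr_def using degree_smult_le order_trans by blast
qed

lemma lagr_interp:
  assumes "inj_on z {..k}" "degree p \<le> k"
  shows "p = (\<Sum>j\<le>k. smult (poly p (z j)) (lagr z k j))"
proof (rule poly_eqI_degree[where A = "z ` {..k}"])
  fix x assume "x \<in> z ` {..k}"
  then obtain i where i: "i \<le> k" "x = z i" by auto
  have "poly (\<Sum>j\<le>k. smult (poly p (z j)) (lagr z k j)) x = (\<Sum>j\<le>k. poly p (z j) * (if i = j then 1 else 0))"
    using i assms by (simp add: poly_sum lagr_eval)
  also have "\<dots> = (\<Sum>j\<le>k. if j = i then poly p (z j) else 0)" by (rule sum.cong) auto
  also have "\<dots> = poly p x" using i by (simp add: sum.delta)
  finally show "poly p x = poly (\<Sum>j\<le>k. smult (poly p (z j)) (lagr z k j)) x" by simp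
next
  have c: "card (z ` {..k}) = Suc k" using assms by (simp add: card_image)
  then show "degree p < card (z ` {..k})" using assms by simp
  have "degree (\<Sum>j\<le>k. smult (poly p (z j)) (lagr z k j)) \<le> k"
    by (rule degree_sum_le) (auto intro: order_trans[OF degree_smult_le] lagr_deg)
  then show "degree (\<Sum>j\<le>k. smult (poly p (z j)) (lagr z k j)) < card (z ` {..k})" using c by simp
qed

lemma Vh_cont: "\<phi> \<in> Vh N k \<Longrightarrow> continuous_on UNIV \<phi>"
  by (simp add: Vh_def)

lemma Vh_per: "\<phi> \<in> Vh N k \<Longrightarrow> \<phi> (x + 1) = \<phi> x"
  by (simp add: Vh_def)

lemma Vh_cell: "\<phi> \<in> Vh N k \<Longrightarrow> i \<in> {1..N} \<Longrightarrow>
   \<exists>p :: real poly. degree p \<le> k \<and> (\<forall>x\<in>{real (i - 1) / real N .. real i / real N}. \<phi> x = poly p x)"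
  by (simp add: Vh_def)

lemma Vh_lin:
  assumes "\<phi> \<in> Vh N k" "\<psi> \<in> Vh N k"
  shows "(\<lambda>x. a * \<phi> x + b * \<psi> x) \<in> Vh N k"
proof -
  have "continuous_on UNIV (\<lambda>x. a * \<phi> x + b * \<psi> x)"
    using Vh_cont[OF assms(1)] Vh_cont[OF assms(2)] by (intro continuous_intros) auto
  moreover have "\<forall>x. a * \<phi> (x+1) + b * \<psi> (x+1) = a * \<phi> x + b * \<psi> x"
    using Vh_per[OF assms(1)] Vh_per[OF assms(2)] by simp
  moreover have "\<forall>i\<in>{1..N}. \<exists>p :: real poly. degree p \<le> k \<and>
         (\<forall>x\<in>{real (i - 1) / real N .. real i / real N}. a * \<phi> x + b * \<psi> x = poly p x)"
  proof
    fix i assume i: "i \<in> {1..N}"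
    obtain p where p: "degree p \<le> k" "\<forall>x\<in>{real (i - 1) / real N .. real i / real N}. \<phi> x = poly p x"
      using Vh_cell[OF assms(1) i] by blast
    obtain q where q: "degree q \<le> k" "\<forall>x\<in>{real (i - 1) / real N .. real i / real N}. \<psi> x = poly q x"
      using Vh_cell[OF assms(2) i] by blast
    have "degree (smult a p + smult b q) \<le> k"
      using p(1) q(1) by (meson degree_add_le degree_smult_le order_trans)
    then show "\<exists>p :: real poly. degree p \<le> k \<and>
         (\<forall>x\<in>{real (i - 1) / real N .. real i / real N}. a * \<phi> x + b * \<psi> x = poly p x)"
      using p(2) q(2) by (intro exI[of _ "smult a p + smult b q"]) auto
  qed
  ultimately show ?thesis by (simp add: Vh_def)
qed

lemma Vh_const: "(\<lambda>x. c) \<in> Vh N k"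
  unfolding Vh_def by (auto intro!: exI[of _ "[:c:]"])

lemma Vh_per_nat: "\<phi> \<in> Vh N k \<Longrightarrow> \<phi> (x + real n) = \<phi> x"
proof (induction n)
  case (Suc n)
  have "x + real (Suc n) = (x + real n) + 1" by simp
  then show ?case by (metis Suc.IH Suc.prems Vh_per)
qed simp

lemma Vh_per_int: "\<phi> \<in> Vh N k \<Longrightarrow> \<phi> (x + real_of_int n) = \<phi> x"
proof (cases "n \<ge> 0")
  case True
  assume a: "\<phi> \<in> Vh N k"
  then show ?thesis using Vh_per_nat[OF a, of x "nat n"] True by simp
next
  case False
  assume a: "\<phi> \<in> Vh N k"
  have "\<phi> ((x + real_of_int n) + real (nat (-n))) = \<phi> (x + real_of_int n)" by (rule Vh_per_nat[OF a])
  then show ?thesis using False by simp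
qed

lemma cell_cover:
  assumes "N \<ge> 1" "x \<in> {0..1::real}"
  shows "\<exists>i\<in>{1..N}. real (i - 1) / real N \<le> x \<and> x \<le> real i / real N"
proof (cases "x = 1")
  case True
  then show ?thesis using assms by (intro bexI[of _ N]) auto
next
  case False
  define i where "i = nat \<lfloor>x * N\<rfloor> + 1"
  have N: "real N > 0" using assms by simp
  have f0: "\<lfloor>x * N\<rfloor> \<ge> 0" using assms by simp
  have f1: "real_of_int \<lfloor>x * N\<rfloor> \<le> x * N" "x * N < real_of_int \<lfloor>x * N\<rfloor> + 1" by linarith+
  have "x * N < N" using False assms N by simp
  then have "\<lfloor>x * N\<rfloor> < N" by linarith
  then have "nat \<lfloor>x * N\<rfloor> < N" using f0 by (simp add: nat_less_iff)
  then have "i \<in> {1..N}" unfolding i_def by auto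
  moreover have "real (i - 1) = real_of_int \<lfloor>x * N\<rfloor>" "real i = real_of_int \<lfloor>x * N\<rfloor> + 1"
    unfolding i_def using f0 by auto
  ultimately show ?thesis using f1 N by (intro bexI[of _ i]) (auto simp: field_simps)
qed

lemma cell_open_cover:
  assumes "N \<ge> 1" "x \<in> {0<..<1::real}" "x \<notin> (\<lambda>j. real j / real N) ` {..N}"
  shows "\<exists>i\<in>{1..N}. real (i - 1) / real N < x \<and> x < real i / real N"
proof -
  obtain i where i: "i \<in> {1..N}" "real (i - 1) / real N \<le> x" "x \<le> real i / real N"
    using cell_cover[OF assms(1), of x] assms(2) by auto
  have "real (i - 1) / real N \<in> (\<lambda>j. real j / real N) ` {..N}"
    using i(1) by (intro rev_image_eqI[of "i-1"]) auto
  moreover have "real i / real N \<in> (\<lambda>j. real j / real N) ` {..N}"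
    using i(1) by (intro rev_image_eqI[of "i"]) auto
  ultimately have "x \<noteq> real (i - 1) / real N" "x \<noteq> real i / real N" using assms(3) by metis+
  then show ?thesis using i by (intro bexI[of _ i]) auto
qed

definition nd :: "nat \<Rightarrow> nat \<Rightarrow> nat \<Rightarrow> nat \<Rightarrow> real" where
  "nd N k i j = real (i - 1) / real N + real j / (real (Suc k) * real N)"

lemma nd_inj: "N \<ge> 1 \<Longrightarrow> inj_on (nd N k i) {..k}"
proof -
  assume "N \<ge> 1"
  then have "real (Suc k) * real N \<noteq> 0" by simp
  then show ?thesis by (auto simp: inj_on_def nd_def divide_cancel_right)
qed

lemma nd_in: assumes "N \<ge> 1" "j \<le> k" "i \<ge> 1"
  shows "nd N k i j \<in> {real (i - 1) / real N .. real i / real N}"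
proof -
  have N: "real N > 0" using assms by simp
  have "real j / (real (Suc k) * real N) \<le> real (Suc k) / (real (Suc k) * real N)"
    by (intro divide_right_mono) (use assms in auto)
  also have "\<dots> = 1 / real N" by simp
  finally have "real j / (real (Suc k) * real N) \<le> 1 / real N" .
  moreover have "real i / real N = real (i - 1) / real N + 1 / real N"
    using assms by (simp add: of_nat_diff field_simps)
  ultimately show ?thesis using N by (auto simp: nd_def)
qed

lemma Vh_rep:
  assumes "\<phi> \<in> Vh N k" "N \<ge> 1" "i \<in> {1..N}" "x \<in> {real (i - 1) / real N .. real i / real N}"
  shows "\<phi> x = (\<Sum>j\<le>k. \<phi> (nd N k i j) * poly (lagr (nd N k i) k j) x)"
proof -
  obtain p where p: "degree p \<le> k" "\<forall>x\<in>{real (i - 1) / real N .. real i / real N}. \<phi> x = poly p x"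
    using Vh_cell[OF assms(1) assms(3)] by blast
  have "p = (\<Sum>j\<le>k. smult (poly p (nd N k i j)) (lagr (nd N k i) k j))"
    by (rule lagr_interp[OF nd_inj[OF assms(2)] p(1)])
  then have "poly p x = (\<Sum>j\<le>k. poly p (nd N k i j) * poly (lagr (nd N k i) k j) x)"
    by (metis (no_types, lifting) poly_smult poly_sum sum.cong)
  also have "\<dots> = (\<Sum>j\<le>k. \<phi> (nd N k i j) * poly (lagr (nd N k i) k j) x)"
    using p(2) nd_in[OF assms(2)] assms(3) by (intro sum.cong) auto
  finally show ?thesis using p(2) assms(4) by simp
qed

lemma Vh_zero_on01:
  assumes "\<phi> \<in> Vh N k" "\<And>x. x \<in> {0..1} \<Longrightarrow> \<phi> x = 0"
  shows "\<phi> = (\<lambda>x. 0)"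
proof
  fix x
  have "\<phi> ((x - of_int \<lfloor>x\<rfloor>) + real_of_int \<lfloor>x\<rfloor>) = \<phi> (x - of_int \<lfloor>x\<rfloor>)"
    by (rule Vh_per_int[OF assms(1)])
  moreover have "x - of_int \<lfloor>x\<rfloor> \<in> {0..1}" by (auto simp: frac_lt_1 less_imp_le) linarith
  ultimately show "\<phi> x = 0" using assms(2) by simp
qed

lemma Vh_zero:
  assumes "\<phi> \<in> Vh N k" "N \<ge> 1" "\<forall>i\<in>{1..N}. \<forall>j\<le>k. \<phi> (nd N k i j) = 0"
  shows "\<phi> = (\<lambda>x. 0)"
proof (rule Vh_zero_on01[OF assms(1)])
  fix x :: real assume xin: "x \<in> {0..1}"
  obtain i where i: "i \<in> {1..N}" "x \<in> {real (i - 1) / real N .. real i / real N}"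
    using cell_cover[OF assms(2) xin] atLeastAtMost_iff by blast
  show "\<phi> x = 0" using Vh_rep[OF assms(1,2) i] assms(3) i(1) by simp
qed

lemma Vh_span: "\<forall>i<(m::nat). b i \<in> Vh N k \<Longrightarrow> (\<lambda>x. \<Sum>i<m. c i * b i x) \<in> Vh N k"
proof (induction m)
  case 0
  then show ?case using Vh_const[of 0] by simp
next
  case (Suc m)
  have "(\<lambda>x. 1 * (\<Sum>i<m. c i * b i x) + c m * b m x) \<in> Vh N k"
    using Suc by (intro Vh_lin) auto
  then show ?case by simp
qed

lemma Vh_int: "\<phi> \<in> Vh N k \<Longrightarrow> \<psi> \<in> Vh N k \<Longrightarrow> (\<lambda>x. \<phi> x * \<psi> x) integrable_on {0..1}"
  by (intro integrable_continuous_interval continuous_intros continuous_on_subset[OF Vh_cont]) auto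

lemma L2ip_lin_left:
  assumes "(\<lambda>x. p x * h x) integrable_on {0..1}" "(\<lambda>x. q x * h x) integrable_on {0..1}"
  shows "L2ip (\<lambda>x. a * p x + b * q x) h = a * L2ip p h + b * L2ip q h"
proof -
  have "(\<lambda>x. (a * p x + b * q x) * h x) = (\<lambda>x. a * (p x * h x) + b * (q x * h x))"
    by (auto simp: algebra_simps)
  then show ?thesis unfolding L2ip_def
    using assms by (simp add: integral_add integrable_on_mult_right)
qed

lemma L2ip_lin_right:
  assumes "(\<lambda>x. h x * p x) integrable_on {0..1}" "(\<lambda>x. h x * q x) integrable_on {0..1}"
  shows "L2ip h (\<lambda>x. a * p x + b * q x) = a * L2ip h p + b * L2ip h q"
proof -
  have "(\<lambda>x. h x * (a * p x + b * q x)) = (\<lambda>x. a * (h x * p x) + b * (h x * q x))"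
    by (auto simp: algebra_simps)
  then show ?thesis unfolding L2ip_def
    using assms by (simp add: integral_add integrable_on_mult_right)
qed

lemma L2ip_sum_right:
  fixes m :: nat
  assumes "\<forall>i<m. (\<lambda>x. h x * b i x) integrable_on {0..1}"
  shows "L2ip h (\<lambda>x. \<Sum>i<m. c i * b i x) = (\<Sum>i<m. c i * L2ip h (b i))"
proof -
  have "(\<lambda>x. h x * (\<Sum>i<m. c i * b i x)) = (\<lambda>x. \<Sum>i<m. c i * (h x * b i x))"
    by (intro ext) (simp add: sum_distrib_left mult.left_commute)
  then show ?thesis unfolding L2ip_def
    using assms by (simp only:) (subst integral_sum, auto intro!: integrable_on_mult_right)
qed

lemma L2ip_sum_left:
  fixes m :: nat
  assumes "\<forall>i<m. (\<lambda>x. b i x * h x) integrable_on {0..1}"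
  shows "L2ip (\<lambda>x. \<Sum>i<m. c i * b i x) h = (\<Sum>i<m. c i * L2ip (b i) h)"
proof -
  have "(\<lambda>x. (\<Sum>i<m. c i * b i x) * h x) = (\<lambda>x. \<Sum>i<m. c i * (b i x * h x))"
    by (intro ext) (simp add: sum_distrib_right mult.assoc)
  then show ?thesis unfolding L2ip_def
    using assms by (simp only:) (subst integral_sum, auto intro!: integrable_on_mult_right)
qed

lemma L2ip_comm: "L2ip f g = L2ip g f"
  unfolding L2ip_def by (simp add: mult.commute)

lemma Vh_sq_zero:
  assumes "e \<in> Vh N k" "L2ip e e = 0" "x \<in> {0..1}"
  shows "e x = 0"
proof -
  have "(\<lambda>x. e x * e x) x = 0"
  proof (rule has_integral_0_cbox_imp_0[where f="\<lambda>x. e x * e x" and a=0 and b=1])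
    show "continuous_on (cbox 0 1) (\<lambda>x. e x * e x)"
      by (intro continuous_intros continuous_on_subset[OF Vh_cont[OF assms(1)]]) auto
    show "\<And>x. x \<in> box 0 1 \<Longrightarrow> 0 \<le> e x * e x" by simp
    show "((\<lambda>x. e x * e x) has_integral 0) (cbox 0 (1::real))"
      using Vh_int[OF assms(1) assms(1)] assms(2) unfolding L2ip_def
      by (metis cbox_interval has_integral_integrable_integral)
    show "box 0 (1::real) \<noteq> {}" by simp
    show "x \<in> cbox 0 1" using assms by simp
  qed
  then show ?thesis by simp
qed

lemma gram:
  fixes m :: nat
  assumes b: "\<forall>i<m. b i \<in> Vh N k"
    and g: "\<forall>\<phi>\<in>Vh N k. (\<lambda>x. g x * \<phi> x) integrable_on {0..1}"
  shows "\<exists>c. \<forall>j<m. L2ip (\<lambda>x. \<Sum>i<m. c i * b i x) (b j) = L2ip g (b j)"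
  using b g
proof (induction m arbitrary: g)
  case 0
  then show ?case by simp
next
  case (Suc m)
  have bm: "\<forall>i<m. b i \<in> Vh N k" and bM: "b m \<in> Vh N k" using Suc.prems by auto
  obtain c0 where c0: "\<forall>j<m. L2ip (\<lambda>x. \<Sum>i<m. c0 i * b i x) (b j) = L2ip g (b j)"
    using Suc.IH[OF bm] Suc.prems(2) by blast
  obtain d where d: "\<forall>j<m. L2ip (\<lambda>x. \<Sum>i<m. d i * b i x) (b j) = L2ip (b m) (b j)"
    using Suc.IH[OF bm, of "b m"] Vh_int[OF bM] by blast
  define \<phi>0 where "\<phi>0 = (\<lambda>x. \<Sum>i<m. c0 i * b i x)"
  define \<psi> where "\<psi> = (\<lambda>x. \<Sum>i<m. d i * b i x)"
  define e where "e = (\<lambda>x. 1 * b m x + (-1) * \<psi> x)"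
  have \<phi>0V: "\<phi>0 \<in> Vh N k" unfolding \<phi>0_def by (rule Vh_span[OF bm])
  have \<psi>V: "\<psi> \<in> Vh N k" unfolding \<psi>_def by (rule Vh_span[OF bm])
  have eV: "e \<in> Vh N k" unfolding e_def by (rule Vh_lin[OF bM \<psi>V])
  have gint: "\<And>\<phi>. \<phi> \<in> Vh N k \<Longrightarrow> (\<lambda>x. g x * \<phi> x) integrable_on {0..1}" using Suc.prems(2) by blast
  have bint: "\<forall>i<m. (\<lambda>x. b i x * h x) integrable_on {0..1}" if "h \<in> Vh N k" for h
    using bm Vh_int that by blast
  have bint2: "\<forall>i<m. (\<lambda>x. h x * b i x) integrable_on {0..1}" if "h \<in> Vh N k" for h
    using bm Vh_int that by blast
  have eorth: "L2ip e (b j) = 0" if "j < m" for j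
  proof -
    have "L2ip e (b j) = 1 * L2ip (b m) (b j) + (-1) * L2ip \<psi> (b j)"
      unfolding e_def using bM \<psi>V bm that by (intro L2ip_lin_left Vh_int) auto
    then show ?thesis using d that unfolding \<psi>_def by simp
  qed
  have bm_eq: "b m = (\<lambda>x. 1 * e x + 1 * \<psi> x)" unfolding e_def by auto
  have psi_val: "L2ip f \<psi> = L2ip g \<psi>"
    if "\<forall>j<m. L2ip f (b j) = L2ip g (b j)" "f \<in> Vh N k" for f
  proof -
    have "L2ip f \<psi> = (\<Sum>i<m. d i * L2ip f (b i))"
      unfolding \<psi>_def by (rule L2ip_sum_right) (use bint2[OF that(2)] in auto)
    also have "\<dots> = (\<Sum>i<m. d i * L2ip g (b i))" using that(1) by simp
    also have "\<dots> = L2ip g \<psi>"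
      unfolding \<psi>_def by (rule L2ip_sum_right[symmetric]) (use gint bm in auto)
    finally show ?thesis .
  qed
  show ?case
  proof (cases "L2ip e e = 0")
    case True
    have ez: "e x = 0" if "x \<in> {0..1}" for x using Vh_sq_zero[OF eV True that] .
    define c where "c = c0(m := 0)"
    have sumeq: "(\<lambda>x. \<Sum>i<Suc m. c i * b i x) = \<phi>0"
    proof
      fix x
      have h: "(\<Sum>i<m. c i * b i x) = (\<Sum>i<m. c0 i * b i x)" by (rule sum.cong) (auto simp: c_def)
      have "c m = 0" by (simp add: c_def)
      then show "(\<Sum>i<Suc m. c i * b i x) = \<phi>0 x" using h unfolding \<phi>0_def by simp
    qed
    have "L2ip \<phi>0 (b j) = L2ip g (b j)" if "j < Suc m" for j
    proof (cases "j < m")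
      case True
      then show ?thesis using c0 unfolding \<phi>0_def by simp
    next
      case False
      then have j: "j = m" using that by simp
      have "L2ip \<phi>0 (b m) = L2ip \<phi>0 \<psi>"
        unfolding L2ip_def by (rule integral_cong) (simp add: bm_eq ez)
      also have "\<dots> = L2ip g \<psi>" by (rule psi_val[OF _ \<phi>0V]) (use c0 \<phi>0_def in auto)
      also have "\<dots> = L2ip g (b m)"
        unfolding L2ip_def by (rule integral_cong) (simp add: bm_eq ez)
      finally show ?thesis using j by simp
    qed
    then show ?thesis using sumeq by (intro exI[of _ c]) auto
  next
    case False
    note eene = False
    define \<alpha> where "\<alpha> = (L2ip g e - L2ip \<phi>0 e) / L2ip e e"
    define c where "c = (\<lambda>i. c0 i - \<alpha> * d i)(m := \<alpha>)"
    define \<phi> where "\<phi> = (\<lambda>x. 1 * \<phi>0 x + \<alpha> * e x)"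
    have \<phi>V: "\<phi> \<in> Vh N k" unfolding \<phi>_def by (rule Vh_lin[OF \<phi>0V eV])
    have sumeq: "(\<lambda>x. \<Sum>i<Suc m. c i * b i x) = \<phi>"
    proof
      fix x
      have "(\<Sum>i<Suc m. c i * b i x) = (\<Sum>i<m. (c0 i - \<alpha> * d i) * b i x) + \<alpha> * b m x"
      proof -
        have h: "(\<Sum>i<m. c i * b i x) = (\<Sum>i<m. (c0 i - \<alpha> * d i) * b i x)"
          by (rule sum.cong) (auto simp: c_def)
        have "c m = \<alpha>" by (simp add: c_def)
        then show ?thesis using h by simp
      qed
      also have "\<dots> = \<phi>0 x - \<alpha> * \<psi> x + \<alpha> * b m x"
        unfolding \<phi>0_def \<psi>_def by (simp add: left_diff_distrib sum_subtractf sum_distrib_left mult.assoc)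
      also have "\<dots> = \<phi> x" unfolding \<phi>_def e_def by (simp add: right_diff_distrib)
      finally show "(\<Sum>i<Suc m. c i * b i x) = \<phi> x" .
    qed
    have small: "L2ip \<phi> (b j) = L2ip g (b j)" if "j < m" for j
    proof -
      have "L2ip \<phi> (b j) = 1 * L2ip \<phi>0 (b j) + \<alpha> * L2ip e (b j)"
        unfolding \<phi>_def using bm that \<phi>0V eV by (intro L2ip_lin_left Vh_int) auto
      then show ?thesis using eorth[OF that] c0 that unfolding \<phi>0_def by simp
    qed
    have "L2ip \<phi> (b j) = L2ip g (b j)" if "j < Suc m" for j
    proof (cases "j < m")
      case True
      then show ?thesis using small by simp
    next
      case False
      then have j: "j = m" using that by simp
      have "L2ip \<phi> (b m) = 1 * L2ip \<phi> e + 1 * L2ip \<phi> \<psi>"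
        by (subst bm_eq, rule L2ip_lin_right[OF Vh_int[OF \<phi>V eV] Vh_int[OF \<phi>V \<psi>V]])
      also have "L2ip \<phi> e = 1 * L2ip \<phi>0 e + \<alpha> * L2ip e e"
        unfolding \<phi>_def by (rule L2ip_lin_left[OF Vh_int[OF \<phi>0V eV] Vh_int[OF eV eV]])
      also have "\<dots> = L2ip g e" using eene unfolding \<alpha>_def by (simp add: field_simps)
      also have "L2ip \<phi> \<psi> = L2ip g \<psi>" by (rule psi_val[OF _ \<phi>V]) (use small in auto)
      also have "1 * L2ip g e + 1 * L2ip g \<psi> = L2ip g (b m)"
        by (subst bm_eq, rule L2ip_lin_right[OF gint[OF eV] gint[OF \<psi>V], symmetric])
      finally show ?thesis using j by simp
    qed
    then show ?thesis using sumeq by (intro exI[of _ c]) auto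
  qed
qed

lemma finite_span:
  fixes W :: "(real \<Rightarrow> real) set"
  assumes lin: "\<forall>f\<in>W. \<forall>g\<in>W. \<forall>a b. (\<lambda>x. a * f x + b * g x) \<in> W"
    and inj: "\<forall>\<phi>\<in>W. (\<forall>z\<in>set zs. \<phi> z = 0) \<longrightarrow> \<phi> = (\<lambda>x. 0)"
  shows "\<exists>(m::nat) b. (\<forall>i<m. b i \<in> W) \<and> (\<forall>\<phi>\<in>W. \<exists>c. \<phi> = (\<lambda>x. \<Sum>i<m. c i * b i x))"
  using lin inj
proof (induction zs arbitrary: W)
  case Nil
  then have "\<forall>\<phi>\<in>W. \<phi> = (\<lambda>x. 0)" by simp
  then show ?case by (intro exI[of _ "0::nat"]) simp
next
  case (Cons z zs)
  define W' where "W' = {\<phi>\<in>W. \<phi> z = 0}"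
  have h1: "\<forall>f\<in>W'. \<forall>g\<in>W'. \<forall>a b. (\<lambda>x. a * f x + b * g x) \<in> W'"
  proof (intro ballI allI)
    fix f g a b assume fg: "f \<in> W'" "g \<in> W'"
    then have "(\<lambda>x. a * f x + b * g x) \<in> W" using Cons.prems(1) unfolding W'_def by blast
    then show "(\<lambda>x. a * f x + b * g x) \<in> W'" using fg unfolding W'_def by simp
  qed
  have h2: "\<forall>\<phi>\<in>W'. (\<forall>z\<in>set zs. \<phi> z = 0) \<longrightarrow> \<phi> = (\<lambda>x. 0)"
  proof (intro ballI impI)
    fix \<phi> assume a: "\<phi> \<in> W'" and b: "\<forall>z'\<in>set zs. \<phi> z' = 0"
    then have "\<forall>z'\<in>set (z # zs). \<phi> z' = 0" unfolding W'_def by simp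
    moreover have "\<phi> \<in> W" using a unfolding W'_def by simp
    ultimately show "\<phi> = (\<lambda>x. 0)" using Cons.prems(2) by blast
  qed
  obtain m :: nat and b where mb: "\<forall>i<m. b i \<in> W'" "\<forall>\<phi>\<in>W'. \<exists>c. \<phi> = (\<lambda>x. \<Sum>i<m. c i * b i x)"
    using Cons.IH[OF h1 h2] by blast
  show ?case
  proof (cases "\<exists>\<phi>1\<in>W. \<phi>1 z \<noteq> 0")
    case False
    then have "W' = W" unfolding W'_def by auto
    then show ?thesis using mb by blast
  next
    case True
    then obtain \<phi>1 where p1: "\<phi>1 \<in> W" "\<phi>1 z \<noteq> 0" by blast
    define b' where "b' = b(m := \<phi>1)"
    have "\<forall>i<Suc m. b' i \<in> W" using mb(1) p1 unfolding b'_def W'_def by auto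
    moreover have "\<forall>\<phi>\<in>W. \<exists>c. \<phi> = (\<lambda>x. \<Sum>i<Suc m. c i * b' i x)"
    proof
      fix \<phi> assume \<phi>: "\<phi> \<in> W"
      define a where "a = \<phi> z / \<phi>1 z"
      have "(\<lambda>x. 1 * \<phi> x + (- a) * \<phi>1 x) \<in> W" using Cons.prems(1) \<phi> p1 by blast
      moreover have "1 * \<phi> z + (- a) * \<phi>1 z = 0" using p1 unfolding a_def by simp
      ultimately have "(\<lambda>x. 1 * \<phi> x + (- a) * \<phi>1 x) \<in> W'" unfolding W'_def by auto
      then obtain c where c: "(\<lambda>x. 1 * \<phi> x + (- a) * \<phi>1 x) = (\<lambda>x. \<Sum>i<m. c i * b i x)"
        using mb(2) by blast
      define c' where "c' = c(m := a)"
      have "\<phi> = (\<lambda>x. \<Sum>i<Suc m. c' i * b' i x)"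
      proof
        fix x
        have h: "(\<Sum>i<m. c' i * b' i x) = (\<Sum>i<m. c i * b i x)"
          by (rule sum.cong) (auto simp: c'_def b'_def)
        have "c' m = a" "b' m = \<phi>1" by (auto simp: c'_def b'_def)
        moreover have "\<phi> x - a * \<phi>1 x = (\<Sum>i<m. c i * b i x)" using fun_cong[OF c, of x] by simp
        ultimately show "\<phi> x = (\<Sum>i<Suc m. c' i * b' i x)" using h by simp
      qed
      then show "\<exists>c. \<phi> = (\<lambda>x. \<Sum>i<Suc m. c i * b' i x)" by blast
    qed
    ultimately show ?thesis by blast
  qed
qed

lemma Vh_basis:
  assumes "N \<ge> 1"
  shows "\<exists>(m::nat) b. (\<forall>i<m. b i \<in> Vh N k) \<and> (\<forall>\<phi>\<in>Vh N k. \<exists>c. \<phi> = (\<lambda>x. \<Sum>i<m. c i * b i x))"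
proof (rule finite_span[where zs = "(concat (map (\<lambda>i. map (nd N k i) [0..<Suc k]) [1..<Suc N]))"])
  show "\<forall>f\<in>Vh N k. \<forall>g\<in>Vh N k. \<forall>a b. (\<lambda>x. a * f x + b * g x) \<in> Vh N k"
    using Vh_lin by blast
  show "\<forall>\<phi>\<in>Vh N k. (\<forall>z\<in>set (concat (map (\<lambda>i. map (nd N k i) [0..<Suc k]) [1..<Suc N])). \<phi> z = 0) \<longrightarrow> \<phi> = (\<lambda>x. 0)"
  proof (intro ballI impI)
    fix \<phi> assume \<phi>: "\<phi> \<in> Vh N k" and z: "\<forall>z\<in>set (concat (map (\<lambda>i. map (nd N k i) [0..<Suc k]) [1..<Suc N])). \<phi> z = 0"
    have "\<forall>i\<in>{1..N}. \<forall>j\<le>k. \<phi> (nd N k i j) = 0"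
    proof (intro ballI allI impI)
      fix i j assume ij: "i \<in> {1..N}" "j \<le> k"
      have m1: "nd N k i j \<in> set (map (nd N k i) [0..<Suc k])" unfolding set_map using ij by (intro imageI) auto
      have m2: "map (nd N k i) [0..<Suc k] \<in> set (map (\<lambda>i. map (nd N k i) [0..<Suc k]) [1..<Suc N])"
        unfolding set_map using ij by (intro rev_image_eqI[of i]) auto
      have "nd N k i j \<in> set (concat (map (\<lambda>i. map (nd N k i) [0..<Suc k]) [1..<Suc N]))"
        unfolding set_concat using m1 m2 by blast
      then show "\<phi> (nd N k i j) = 0" using z by blast
    qed
    then show "\<phi> = (\<lambda>x. 0)" by (rule Vh_zero[OF \<phi> assms])
  qed
qed

lemma proj:
  assumes N: "N \<ge> 1" and g: "\<forall>\<phi>\<in>Vh N k. (\<lambda>x. g x * \<phi> x) integrable_on {0..1}"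
  shows "L2proj N k g \<in> Vh N k \<and> (\<forall>w\<in>Vh N k. L2ip (L2proj N k g) w = L2ip g w)"
proof -
  obtain m :: nat and b where mb: "\<forall>i<m. b i \<in> Vh N k" "\<forall>\<phi>\<in>Vh N k. \<exists>c. \<phi> = (\<lambda>x. \<Sum>i<m. c i * b i x)"
    using Vh_basis[OF N] by blast
  obtain c where c: "\<forall>j<m. L2ip (\<lambda>x. \<Sum>i<m. c i * b i x) (b j) = L2ip g (b j)"
    using gram[OF mb(1) g] by blast
  define \<phi> where "\<phi> = (\<lambda>x. \<Sum>i<m. c i * b i x)"
  have \<phi>V: "\<phi> \<in> Vh N k" unfolding \<phi>_def by (rule Vh_span[OF mb(1)])
  have \<phi>P: "\<forall>w\<in>Vh N k. L2ip \<phi> w = L2ip g w"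
  proof
    fix w assume w: "w \<in> Vh N k"
    obtain d where d: "w = (\<lambda>x. \<Sum>i<m. d i * b i x)" using mb(2) w by blast
    have "L2ip \<phi> w = (\<Sum>i<m. d i * L2ip \<phi> (b i))"
      unfolding d by (rule L2ip_sum_right) (use mb(1) Vh_int[OF \<phi>V] in blast)
    also have "\<dots> = (\<Sum>i<m. d i * L2ip g (b i))" using c unfolding \<phi>_def by simp
    also have "\<dots> = L2ip g w"
      unfolding d by (rule L2ip_sum_right[symmetric]) (use mb(1) g in blast)
    finally show "L2ip \<phi> w = L2ip g w" .
  qed
  have uniq: "\<psi> = \<phi>" if "\<psi> \<in> Vh N k \<and> (\<forall>w\<in>Vh N k. L2ip \<psi> w = L2ip g w)" for \<psi>
  proof -
    define e where "e = (\<lambda>x. 1 * \<psi> x + (-1) * \<phi> x)"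
    have eV: "e \<in> Vh N k" unfolding e_def using that \<phi>V by (intro Vh_lin) auto
    have \<psi>V: "\<psi> \<in> Vh N k" using that by blast
    have "L2ip (\<lambda>x. 1 * \<psi> x + (-1) * \<phi> x) e = 1 * L2ip \<psi> e + (-1) * L2ip \<phi> e"
      by (rule L2ip_lin_left[OF Vh_int[OF \<psi>V eV] Vh_int[OF \<phi>V eV]])
    then have "L2ip e e = 1 * L2ip \<psi> e + (-1) * L2ip \<phi> e" unfolding e_def[symmetric] .
    also have "\<dots> = 0" using that \<phi>P eV by simp
    finally have ee: "L2ip e e = 0" .
    have "e = (\<lambda>x. 0)" by (rule Vh_zero_on01[OF eV]) (rule Vh_sq_zero[OF eV ee])
    then have "\<And>x. 1 * \<psi> x + (-1) * \<phi> x = 0" unfolding e_def by metis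
    then show ?thesis by (intro ext) (simp add: algebra_simps)
  qed
  have "L2proj N k g = \<phi>" unfolding L2proj_def
  proof (rule the_equality)
    show "\<phi> \<in> Vh N k \<and> (\<forall>w\<in>Vh N k. L2ip \<phi> w = L2ip g w)" using \<phi>V \<phi>P by blast
    fix \<psi> assume "\<psi> \<in> Vh N k \<and> (\<forall>w\<in>Vh N k. L2ip \<psi> w = L2ip g w)"
    then show "\<psi> = \<phi>" by (rule uniq)
  qed
  then show ?thesis using \<phi>V \<phi>P by simp
qed

lemma cell_sub:
  assumes N: "N \<ge> 1" 
  shows "i \<in> {1..N} \<Longrightarrow> x \<in> {real (i - 1) / real N .. real i / real N} \<Longrightarrow> x \<in> {0..1}"
proof -
  assume i: "i \<in> {1..N}" and x: "x \<in> {real (i - 1) / real N .. real i / real N}"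
  have b: "real i / real N \<le> 1" using i N by simp
  have a: "0 \<le> real (i - 1) / real N" by simp
  show "x \<in> {0..1}" using x a b unfolding atLeastAtMost_iff by linarith
qed

lemma joint_cont:
  assumes N: "N \<ge> 1" and S: "closed S" and F: "\<forall>s\<in>S. F s \<in> Vh N k"
    and Fc: "\<forall>x. continuous_on S (\<lambda>s. F s x)"
  shows "continuous_on (S \<times> {0..1}) (\<lambda>p. F (fst p) (snd p))"
proof -
  have eq: "S \<times> {0..1} = (\<Union>i\<in>{1..N}. S \<times> {real (i - 1) / real N .. real i / real N})"
  proof
    show "S \<times> {0..1} \<subseteq> (\<Union>i\<in>{1..N}. S \<times> {real (i - 1) / real N .. real i / real N})"
    proof
      fix p assume p: "p \<in> S \<times> {0..(1::real)}"
      obtain i where i: "i \<in> {1..N}" "real (i - 1) / real N \<le> snd p \<and> snd p \<le> real i / real N"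
        using cell_cover[OF N, of "snd p"] p by auto
      then show "p \<in> (\<Union>i\<in>{1..N}. S \<times> {real (i - 1) / real N .. real i / real N})"
        using p by (auto simp: mem_Times_iff)
    qed
    show "(\<Union>i\<in>{1..N}. S \<times> {real (i - 1) / real N .. real i / real N}) \<subseteq> S \<times> {0..1}"
      using cell_sub[OF N] by (auto simp: mem_Times_iff)
  qed
  have "continuous_on (\<Union>i\<in>{1..N}. S \<times> {real (i - 1) / real N .. real i / real N}) (\<lambda>p. F (fst p) (snd p))"
  proof (rule continuous_on_closed_Union)
    fix i assume i: "i \<in> {1..N}"
    show "closed (S \<times> {real (i - 1) / real N .. real i / real N})" using S by (intro closed_Times) auto
    have c: "continuous_on (S \<times> {real (i - 1) / real N .. real i / real N})
        (\<lambda>p. \<Sum>j\<le>k. F (fst p) (nd N k i j) * poly (lagr (nd N k i) k j) (snd p))"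
    proof (intro continuous_intros)
      fix j
      show "continuous_on (S \<times> {real (i - 1) / real N .. real i / real N}) (\<lambda>p. F (fst p) (nd N k i j))"
        by (rule continuous_on_compose2[OF Fc[rule_format, of "nd N k i j"] continuous_on_fst]) auto
    qed
    show "continuous_on (S \<times> {real (i - 1) / real N .. real i / real N}) (\<lambda>p. F (fst p) (snd p))"
      by (rule continuous_on_eq[OF c]) (use Vh_rep[OF _ N i] F in \<open>auto simp: mem_Times_iff\<close>)
  qed simp
  then show ?thesis using eq by simp
qed

lemma Vh_deriv:
  assumes "\<phi> \<in> Vh N k" "i \<in> {1..N}" "\<forall>x\<in>{real (i - 1) / real N .. real i / real N}. \<phi> x = poly p x"
    "x \<in> {real (i - 1) / real N <..< real i / real N}"
  shows "(\<phi> has_real_derivative poly (pderiv p) x) (at x)" "deriv \<phi> x = poly (pderiv p) x"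
proof -
  show d: "(\<phi> has_real_derivative poly (pderiv p) x) (at x)"
    by (rule has_field_derivative_transform_within_open[OF poly_DERIV[of p x], of "{real (i - 1) / real N <..< real i / real N}"])
       (use assms(3,4) in auto)
  then show "deriv \<phi> x = poly (pderiv p) x" by (rule DERIV_imp_deriv)
qed

lemma piecewise_integrable:
  fixes f :: "real \<Rightarrow> real"
  assumes N: "N \<ge> 1" and f: "\<forall>i\<in>{1..N}. f integrable_on {real (i - 1) / real N .. real i / real N}"
  shows "f integrable_on {0..1::real}"
proof -
  have "m \<le> N \<Longrightarrow> f integrable_on {0 .. real m / real N}" for m
  proof (induction m)
    case 0
    then show ?case using integrable_on_refl[of f 0] by simp
  next
    case (Suc m)
    have "f integrable_on {real (Suc m - 1) / real N .. real (Suc m) / real N}"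
    proof -
      have "Suc m \<in> {1..N}" using Suc.prems by simp
      then show ?thesis using f by blast
    qed
    then have cf: "f integrable_on {real m / real N .. real (Suc m) / real N}" by simp
    have le: "real m / real N \<le> real (Suc m) / real N" by (simp add: divide_right_mono)
    have IH: "f integrable_on {0 .. real m / real N}" using Suc by simp
    show ?case by (rule Henstock_Kurzweil_Integration.integrable_combine[OF _ le IH cf]) simp
  qed
  from this[of N] show ?thesis using N by simp
qed

lemma Vh_dint:
  assumes N: "N \<ge> 1" and \<phi>: "\<phi> \<in> Vh N k" and \<psi>: "\<psi> \<in> Vh N k"
  shows "(\<lambda>x. \<phi> x * deriv \<psi> x) integrable_on {0..1}"
proof (rule piecewise_integrable[OF N], intro ballI)
  fix i assume i: "i \<in> {1..N}"
  obtain p where p: "\<forall>x\<in>{real (i - 1) / real N .. real i / real N}. \<phi> x = poly p x"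
    using Vh_cell[OF \<phi> i] by blast
  obtain q where q: "\<forall>x\<in>{real (i - 1) / real N .. real i / real N}. \<psi> x = poly q x"
    using Vh_cell[OF \<psi> i] by blast
  show "(\<lambda>x. \<phi> x * deriv \<psi> x) integrable_on {real (i - 1) / real N .. real i / real N}"
  proof (rule integrable_spike_finite[of "{real (i - 1) / real N, real i / real N}"])
    show "(\<lambda>x. poly p x * poly (pderiv q) x) integrable_on {real (i - 1) / real N .. real i / real N}"
      by (intro integrable_continuous_interval continuous_intros)
    fix x assume x: "x \<in> {real (i - 1) / real N .. real i / real N} - {real (i - 1) / real N, real i / real N}"
    then have "deriv \<psi> x = poly (pderiv q) x" using Vh_deriv(2)[OF \<psi> i q] by auto
    then show "\<phi> x * deriv \<psi> x = poly p x * poly (pderiv q) x" using p x by auto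
  qed simp
qed

lemma ibp:
  assumes N: "N \<ge> 1" and \<phi>: "\<phi> \<in> Vh N k" and \<psi>: "\<psi> \<in> Vh N k"
  shows "L2ip \<phi> (deriv \<psi>) = - L2ip \<psi> (deriv \<phi>)"
proof -
  have "((\<lambda>x. \<phi> x * deriv \<psi> x + deriv \<phi> x * \<psi> x) has_integral (\<phi> 1 * \<psi> 1 - \<phi> 0 * \<psi> 0)) {0..1}"
  proof (rule fundamental_theorem_of_calculus_interior_strong[where S="(\<lambda>j. real j / real N) ` {..N}" and f="\<lambda>x. \<phi> x * \<psi> x" and f'="\<lambda>x. \<phi> x * deriv \<psi> x + deriv \<phi> x * \<psi> x"])
    show "continuous_on {0..1} (\<lambda>x. \<phi> x * \<psi> x)"
      by (intro continuous_intros continuous_on_subset[OF Vh_cont[OF \<phi>]] continuous_on_subset[OF Vh_cont[OF \<psi>]]) auto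
    fix x assume x: "x \<in> {0<..<1} - (\<lambda>j. real j / real N) ` {..N}"
    have x1: "x \<in> {0<..<1}" "x \<notin> (\<lambda>j. real j / real N) ` {..N}" using x by auto
    obtain i where i0: "i \<in> {1..N}" "real (i - 1) / real N < x \<and> x < real i / real N"
      using cell_open_cover[OF N x1] by blast
    then have i: "i \<in> {1..N}" "x \<in> {real (i - 1) / real N <..< real i / real N}" by auto
    obtain p where p: "\<forall>x\<in>{real (i - 1) / real N .. real i / real N}. \<phi> x = poly p x"
      using Vh_cell[OF \<phi> i(1)] by blast
    obtain q where q: "\<forall>x\<in>{real (i - 1) / real N .. real i / real N}. \<psi> x = poly q x"
      using Vh_cell[OF \<psi> i(1)] by blast
    have e1: "deriv \<phi> x = poly (pderiv p) x" by (rule Vh_deriv(2)[OF \<phi> i(1) p i(2)])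
    have e2: "deriv \<psi> x = poly (pderiv q) x" by (rule Vh_deriv(2)[OF \<psi> i(1) q i(2)])
    have "((\<lambda>x. \<phi> x * \<psi> x) has_real_derivative (\<phi> x * deriv \<psi> x + deriv \<phi> x * \<psi> x)) (at x)"
      unfolding e1 e2 by (rule DERIV_mult'[OF Vh_deriv(1)[OF \<phi> i(1) p i(2)] Vh_deriv(1)[OF \<psi> i(1) q i(2)]])
    then show "((\<lambda>x. \<phi> x * \<psi> x) has_vector_derivative (\<phi> x * deriv \<psi> x + deriv \<phi> x * \<psi> x)) (at x)"
      unfolding has_real_derivative_iff_has_vector_derivative .
  qed auto
  moreover have "\<phi> 1 * \<psi> 1 - \<phi> 0 * \<psi> 0 = 0" using Vh_per[OF \<phi>, of 0] Vh_per[OF \<psi>, of 0] by simp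
  ultimately have "integral {0..1} (\<lambda>x. \<phi> x * deriv \<psi> x + deriv \<phi> x * \<psi> x) = 0"
    by (simp add: integral_unique)
  moreover have "(\<lambda>x. deriv \<phi> x * \<psi> x) integrable_on {0..1}"
    using Vh_dint[OF N \<psi> \<phi>] by (simp add: mult.commute)
  ultimately have "integral {0..1} (\<lambda>x. \<phi> x * deriv \<psi> x) + integral {0..1} (\<lambda>x. \<psi> x * deriv \<phi> x) = 0"
    using Vh_dint[OF N \<phi> \<psi>] by (simp add: integral_add mult.commute)
  then show ?thesis unfolding L2ip_def by simp
qed

theorem proposition3p1:
  fixes N k :: nat and T :: real and u ut :: "real \<Rightarrow> real \<Rightarrow> real"
  assumes "k \<ge> 1" and "N \<ge> 1" and "T > 0"
    and u_in: "\<forall>t\<in>{0..T}. u t \<in> Vh N k"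
    and ut_in: "\<forall>t\<in>{0..T}. ut t \<in> Vh N k"
    and u_deriv: "\<forall>t\<in>{0..T}. \<forall>x. ((\<lambda>s. u s x) has_real_derivative ut t x) (at t within {0..T})"
    and ut_cont: "\<forall>x. continuous_on {0..T} (\<lambda>t. ut t x)"
    and scheme: "\<forall>t\<in>{0..T}. \<forall>w\<in>Vh N k.
        L2ip (ut t) w + L2ip (L2proj N k (deriv (ut t))) (deriv w)
        = L2ip (L2proj N k (\<lambda>x. u t x + (u t x)\<^sup>2 / 2)) (deriv w)"
  shows "\<forall>t\<in>{0..T}. ((\<lambda>s. mass (u s)) has_real_derivative 0) (at t within {0..T})
           \<and> ((\<lambda>s. energy (u s)) has_real_derivative 0) (at t within {0..T})"
proof
  fix t assume t: "t \<in> {0..T}"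
  have N: "N \<ge> 1" by fact
  have u_cont: "\<forall>x. continuous_on {0..T} (\<lambda>s. u s x)"
    using u_deriv by (auto simp: continuous_on_eq_continuous_within intro: DERIV_continuous)
  have JCu: "continuous_on ({0..T} \<times> {0..1}) (\<lambda>p. u (fst p) (snd p))"
    by (rule joint_cont[OF N _ u_in u_cont]) simp
  have JCut: "continuous_on ({0..T} \<times> {0..1}) (\<lambda>p. ut (fst p) (snd p))"
    by (rule joint_cont[OF N _ ut_in ut_cont]) simp
  have uV: "u s \<in> Vh N k" if "s \<in> {0..T}" for s using u_in that by blast
  have utV: "ut s \<in> Vh N k" if "s \<in> {0..T}" for s using ut_in that by blast
  have ucont1: "continuous_on {0..1} (u s)" if "s \<in> {0..T}" for s
    by (rule continuous_on_subset[OF Vh_cont[OF uV[OF that]]]) simp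
  have dm: "((\<lambda>s. integral (cbox 0 1) (u s)) has_real_derivative integral (cbox 0 1) (ut t)) (at t within {0..T})"
  proof (rule leibniz_rule_field_derivative[where f = "\<lambda>s x. u s x" and fx = "\<lambda>s x. ut s x"])
    show "\<And>s x. s \<in> {0..T} \<Longrightarrow> x \<in> cbox 0 1 \<Longrightarrow> ((\<lambda>s. u s x) has_real_derivative ut s x) (at s within {0..T})"
      using u_deriv by blast
    show "\<And>s. s \<in> {0..T} \<Longrightarrow> u s integrable_on cbox 0 1"
      using ucont1 by (auto intro: integrable_continuous_interval)
    show "continuous_on ({0..T} \<times> cbox 0 1) (\<lambda>(s, x). ut s x)"
      using JCut by (simp add: case_prod_beta)
  qed (use t in auto)
  have de: "((\<lambda>s. integral (cbox 0 1) (\<lambda>x. (u s x)\<^sup>2 + (u s x)^3 / 3)) has_real_derivative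
      integral (cbox 0 1) (\<lambda>x. (2 * u t x + (u t x)\<^sup>2) * ut t x)) (at t within {0..T})"
  proof (rule leibniz_rule_field_derivative[where f = "\<lambda>s x. (u s x)\<^sup>2 + (u s x)^3 / 3"
        and fx = "\<lambda>s x. (2 * u s x + (u s x)\<^sup>2) * ut s x"])
    fix s x assume s: "s \<in> {0..T}" and x: "x \<in> cbox 0 (1::real)"
    have d: "((\<lambda>s. u s x) has_real_derivative ut s x) (at s within {0..T})" using u_deriv s by blast
    show "((\<lambda>s. (u s x)\<^sup>2 + (u s x)^3 / 3) has_real_derivative (2 * u s x + (u s x)\<^sup>2) * ut s x) (at s within {0..T})"
      by (rule derivative_eq_intros d refl | simp add: power2_eq_square algebra_simps)+
  next
    fix s assume s: "s \<in> {0..T}"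
    show "(\<lambda>x. (u s x)\<^sup>2 + (u s x)^3 / 3) integrable_on cbox 0 1"
      using ucont1[OF s] by (auto intro!: integrable_continuous_interval continuous_intros)
  next
    have "continuous_on ({0..T} \<times> {0..1})
        (\<lambda>p. (2 * u (fst p) (snd p) + (u (fst p) (snd p))\<^sup>2) * ut (fst p) (snd p))"
      using JCu JCut by (intro continuous_intros) auto
    then show "continuous_on ({0..T} \<times> cbox 0 1) (\<lambda>(s, x). (2 * u s x + (u s x)\<^sup>2) * ut s x)"
      by (simp add: case_prod_beta)
  qed (use t in auto)
  define v where "v = ut t"
  define g where "g = (\<lambda>x. u t x + (u t x)\<^sup>2 / 2)"
  define w where "w = L2proj N k g"
  define Dv where "Dv = L2proj N k (deriv v)"
  have vV: "v \<in> Vh N k" unfolding v_def using utV t by blast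
  have gint: "\<forall>\<phi>\<in>Vh N k. (\<lambda>x. g x * \<phi> x) integrable_on {0..1}"
  proof
    fix \<phi> assume \<phi>: "\<phi> \<in> Vh N k"
    show "(\<lambda>x. g x * \<phi> x) integrable_on {0..1}" unfolding g_def
      using ucont1[OF t] by (intro integrable_continuous_interval continuous_intros continuous_on_subset[OF Vh_cont[OF \<phi>]]) auto
  qed
  have dvint: "\<forall>\<phi>\<in>Vh N k. (\<lambda>x. deriv v x * \<phi> x) integrable_on {0..1}"
    using Vh_dint[OF N _ vV] by (simp add: mult.commute)
  have wP: "w \<in> Vh N k \<and> (\<forall>b\<in>Vh N k. L2ip w b = L2ip g b)"
    unfolding w_def by (rule proj[OF N gint])
  have DvP: "Dv \<in> Vh N k \<and> (\<forall>b\<in>Vh N k. L2ip Dv b = L2ip (deriv v) b)"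
    unfolding Dv_def by (rule proj[OF N dvint])
  have wV: "w \<in> Vh N k" and DvV: "Dv \<in> Vh N k" using wP DvP by auto
  have S1: "L2ip v w + L2ip Dv (deriv w) = L2ip w (deriv w)"
    using scheme t wV unfolding v_def Dv_def w_def g_def by blast
  have S2: "L2ip v Dv + L2ip Dv (deriv Dv) = L2ip w (deriv Dv)"
    using scheme t DvV unfolding v_def Dv_def w_def g_def by blast
  have z1: "L2ip w (deriv w) = 0" using ibp[OF N wV wV] by simp
  have z2: "L2ip Dv (deriv Dv) = 0" using ibp[OF N DvV DvV] by simp
  have z3: "L2ip v Dv = 0"
  proof -
    have "L2ip v Dv = L2ip Dv v" by (rule L2ip_comm)
    also have "\<dots> = L2ip (deriv v) v" using DvP vV by blast
    also have "\<dots> = L2ip v (deriv v)" by (rule L2ip_comm)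
    also have "\<dots> = 0" using ibp[OF N vV vV] by simp
    finally show ?thesis .
  qed
  have "L2ip w (deriv Dv) = 0" using S2 z2 z3 by simp
  then have "L2ip Dv (deriv w) = 0" using ibp[OF N wV DvV] by simp
  then have vw: "L2ip v w = 0" using S1 z1 by simp
  have gv: "L2ip g v = 0"
  proof -
    have "L2ip g v = L2ip w v" using wP vV by simp
    also have "\<dots> = L2ip v w" by (rule L2ip_comm)
    finally show ?thesis using vw by simp
  qed
  have mass0: "integral {0..1} (ut t) = 0"
  proof -
    have "L2ip (ut t) (\<lambda>x. 1) + L2ip (L2proj N k (deriv (ut t))) (deriv (\<lambda>x. 1))
        = L2ip (L2proj N k (\<lambda>x. u t x + (u t x)\<^sup>2 / 2)) (deriv (\<lambda>x. 1))"
      using scheme t Vh_const[of 1 N k] by blast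
    then have "L2ip (ut t) (\<lambda>x. 1) = 0" by (simp add: L2ip_def)
    then show ?thesis by (simp add: L2ip_def)
  qed
  have energy0: "integral {0..1} (\<lambda>x. (2 * u t x + (u t x)\<^sup>2) * ut t x) = 0"
  proof -
    have "integral {0..1} (\<lambda>x. (2 * u t x + (u t x)\<^sup>2) * ut t x) = integral {0..1} (\<lambda>x. 2 * (g x * v x))"
      unfolding g_def v_def by (rule integral_cong) (simp add: algebra_simps)
    also have "\<dots> = 2 * L2ip g v" by (simp add: L2ip_def)
    finally show ?thesis using gv by simp
  qed
  show "((\<lambda>s. mass (u s)) has_real_derivative 0) (at t within {0..T})
           \<and> ((\<lambda>s. energy (u s)) has_real_derivative 0) (at t within {0..T})"
  proof
    show "((\<lambda>s. mass (u s)) has_real_derivative 0) (at t within {0..T})"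
      using dm mass0 unfolding mass_def by (simp add: cbox_interval)
    have "((\<lambda>s. 1/2 * integral (cbox 0 1) (\<lambda>x. (u s x)\<^sup>2 + (u s x)^3 / 3)) has_real_derivative
      1/2 * integral (cbox 0 1) (\<lambda>x. (2 * u t x + (u t x)\<^sup>2) * ut t x)) (at t within {0..T})"
      by (rule DERIV_cmult[OF de])
    then show "((\<lambda>s. energy (u s)) has_real_derivative 0) (at t within {0..T})"
      using energy0 unfolding energy_def by (simp add: cbox_interval)
  qed
qed

end
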